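(* Let $L$ be a linear continuum with endpoints, let $(f_i:i\in I)$ be an indiscernible sequence of single elements of $M_L$ (indexed by a linear order $I$), and let $(a_i:i\in I)\in\mathrm{im}(f_i:i\in I)$. Then $(a_i:i\in I)$ is either nondecreasing or nonincreasing in $i$.
   Context: A linear continuum is a dense linear order with the least upper bound property; with endpoints means it has a least and greatest element. $M_L$ is the set of functions $f:L\to[0,1]$ that are nondecreasing, continuous in the order topology, with $\inf f=0$ and $\sup f=1$, with the sup metric, regarded as a metric structure in the language of binary predicates $\varphi_\alpha$ ($\alpha\in\mathbb{Q}\cap[0,1]$), where $\varphi_\alpha(f,g)=f(t)$ for any $t\in L$ with $f(t)+g(t)=\alpha$ (independent of the choice of $t$). $\mathrm{im}(f_i:i\in I)=\{(f_i(t))_{i\in I}:t\in L\}$. A sequence is indiscernible if every formula takes the same value on all increasing tuples from it. *)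

theory Defs
  imports "HOL-Analysis.Analysis"
begin

definition M_L :: "('l::{complete_linorder, linorder_topology} \<Rightarrow> real) set" where
  "M_L = {f. (\<forall>t. 0 \<le> f t \<and> f t \<le> 1) \<and> mono f \<and> continuous_on UNIV f
            \<and> (INF t. f t) = 0 \<and> (SUP t. f t) = 1}"

definition M_L_dist :: "('l \<Rightarrow> real) \<Rightarrow> ('l \<Rightarrow> real) \<Rightarrow> real" where
  "M_L_dist f g = (SUP t. \<bar>f t - g t\<bar>)"

definition phi :: "rat \<Rightarrow> ('l \<Rightarrow> real) \<Rightarrow> ('l \<Rightarrow> real) \<Rightarrow> real" where
  "phi \<alpha> f g = f (SOME t. f t + g t = of_rat \<alpha>)"

text \<open>Continuous-logic formulas in the language {d} \<union> {phi_alpha}, with the standard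
  (uniformly dense) set of connectives 0, 1-x, x/2, x -. y and the quantifiers sup, inf.
  Variables are de Bruijn indices; quantifiers bind index 0.\<close>
datatype cform =
    CDist nat nat
  | CPhi rat nat nat
  | CZero
  | CNeg cform
  | CHalf cform
  | CMinus cform cform
  | CSup cform
  | CInf cform

fun fv :: "cform \<Rightarrow> nat set" where
  "fv (CDist x y) = {x, y}"
| "fv (CPhi a x y) = {x, y}"
| "fv CZero = {}"
| "fv (CNeg p) = fv p"
| "fv (CHalf p) = fv p"
| "fv (CMinus p q) = fv p \<union> fv q"
| "fv (CSup p) = {k. Suc k \<in> fv p}"
| "fv (CInf p) = {k. Suc k \<in> fv p}"

definition scons :: "'a \<Rightarrow> (nat \<Rightarrow> 'a) \<Rightarrow> nat \<Rightarrow> 'a" where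
  "scons g \<rho> k = (case k of 0 \<Rightarrow> g | Suc j \<Rightarrow> \<rho> j)"

text \<open>Predicate symbols phi_alpha exist only for alpha in Q \<inter> [0,1]; other indices are
  interpreted as the constant 0 (harmless).\<close>
fun ceval :: "cform \<Rightarrow> (nat \<Rightarrow> ('l::{complete_linorder, linorder_topology} \<Rightarrow> real)) \<Rightarrow> real" where
  "ceval (CDist x y) \<rho> = M_L_dist (\<rho> x) (\<rho> y)"
| "ceval (CPhi a x y) \<rho> = (if 0 \<le> a \<and> a \<le> 1 then phi a (\<rho> x) (\<rho> y) else 0)"
| "ceval CZero \<rho> = 0"
| "ceval (CNeg p) \<rho> = 1 - ceval p \<rho>"
| "ceval (CHalf p) \<rho> = ceval p \<rho> / 2"
| "ceval (CMinus p q) \<rho> = max (ceval p \<rho> - ceval q \<rho>) 0"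
| "ceval (CSup p) \<rho> = (SUP g\<in>M_L. ceval p (scons g \<rho>))"
| "ceval (CInf p) \<rho> = (INF g\<in>M_L. ceval p (scons g \<rho>))"

definition tuple_env :: "('i \<Rightarrow> ('l \<Rightarrow> real)) \<Rightarrow> 'i list \<Rightarrow> nat \<Rightarrow> ('l \<Rightarrow> real)" where
  "tuple_env f xs k = (if k < length xs then f (xs ! k) else undefined)"

definition indiscernible ::
  "('i::linorder \<Rightarrow> ('l::{complete_linorder, linorder_topology} \<Rightarrow> real)) \<Rightarrow> bool" where
  "indiscernible f \<longleftrightarrow>
     (\<forall>\<phi> xs ys. sorted_wrt (<) xs \<and> sorted_wrt (<) ys \<and> length xs = length ys
        \<and> fv \<phi> \<subseteq> {..<length xs}
        \<longrightarrow> ceval \<phi> (tuple_env f xs) = ceval \<phi> (tuple_env f ys))"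

definition im :: "('i \<Rightarrow> ('l \<Rightarrow> real)) \<Rightarrow> ('i \<Rightarrow> real) set" where
  "im f = {(\<lambda>i. f i t) | t. True}"

end

theory Submission
  imports Defs
begin

lemma Mprops:
  fixes f :: "'l::{complete_linorder, dense_linorder, linorder_topology} \<Rightarrow> real"
  assumes "f \<in> M_L"
  shows "mono f" "continuous_on UNIV f" "\<And>t. 0 \<le> f t" "\<And>t. f t \<le> 1" "f bot = 0" "f top = 1"
proof -
  show m: "mono f" using assms by (simp add: M_L_def)
  show "continuous_on UNIV f" using assms by (simp add: M_L_def)
  show "\<And>t. 0 \<le> f t" "\<And>t. f t \<le> 1" using assms by (auto simp add: M_L_def)
  have "(INF t. f t) = f bot"
    by (rule cInf_eq_minimum) (auto intro: monoD[OF m])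
  then show "f bot = 0" using assms by (simp add: M_L_def)
  have "(SUP t. f t) = f top"
    by (rule cSup_eq_maximum) (auto intro: monoD[OF m])
  then show "f top = 1" using assms by (simp add: M_L_def)
qed

lemma IVT_L:
  fixes F :: "'l::{complete_linorder, dense_linorder, linorder_topology} \<Rightarrow> real"
  assumes m: "mono F" and c: "continuous_on UNIV F" and y1: "F bot \<le> y" and y2: "y \<le> F top"
  shows "\<exists>t. F t = y"
proof -
  define S where "S = {s. F s \<le> y}"
  define t where "t = Sup S"
  have botS: "bot \<in> S" using y1 by (simp add: S_def)
  have opn: "open (F -` B)" if "open B" for B
    using c that by (simp add: continuous_on_open_vimage[of UNIV])
  have le: "F t \<le> y"
  proof (rule ccontr)
    assume "\<not> F t \<le> y"
    hence gt: "F t > y" by simp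
    have "t \<noteq> bot" using gt y1 by auto
    hence "bot < t" by (simp add: bot.not_eq_extremum)
    have o: "open (F -` {y<..})" by (rule opn) simp
    obtain b where b: "b < t" "{b<..t} \<subseteq> F -` {y<..}"
      using open_left[OF o _ \<open>bot < t\<close>] gt by auto
    obtain s where s: "s \<in> S" "b < s" using b(1) unfolding t_def by (auto simp: less_Sup_iff)
    have "s \<le> t" unfolding t_def using s(1) by (rule Sup_upper)
    hence "F s > y" using b s by auto
    thus False using s by (simp add: S_def)
  qed
  have ge: "F t \<ge> y"
  proof (rule ccontr)
    assume "\<not> F t \<ge> y"
    hence lt: "F t < y" by simp
    have "t \<noteq> top" using lt y2 by auto
    hence "t < top" by (simp add: top.not_eq_extremum)
    have o: "open (F -` {..<y})" by (rule opn) simp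
    obtain b where b: "b > t" "{t..<b} \<subseteq> F -` {..<y}"
      using open_right[OF o _ \<open>t < top\<close>] lt by auto
    obtain z where z: "t < z" "z < b" using dense[OF b(1)] by auto
    have "z \<in> {t..<b}" using z by simp
    hence "F z < y" using b by auto
    hence "z \<in> S" by (simp add: S_def)
    hence "z \<le> t" unfolding t_def by (rule Sup_upper)
    thus False using z by simp
  qed
  show ?thesis using le ge by (intro exI[of _ t]) simp
qed

lemma IVT_M:
  fixes F :: "'l::{complete_linorder, dense_linorder, linorder_topology} \<Rightarrow> real"
  assumes "F \<in> M_L" "0 \<le> y" "y \<le> 1"
  shows "\<exists>t. F t = y"
  using IVT_L[of F y] Mprops[OF assms(1)] assms by auto

lemma sum_level:
  fixes F G :: "'l::linorder \<Rightarrow> real"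
  assumes "mono F" "mono G" "F a + G a = F b + G b"
  shows "F a = F b \<and> G a = G b"
proof (cases "a \<le> b")
  case True
  then have "F a \<le> F b" "G a \<le> G b" using assms monoD by blast+
  then show ?thesis using assms(3) by linarith
next
  case False
  then have "F b \<le> F a" "G b \<le> G a" using assms monoD by (metis linear)+
  then show ?thesis using assms(3) by linarith
qed

lemma phi_comm: "phi \<alpha> G F = G (SOME t. F t + G t = of_rat \<alpha>)"
  unfolding phi_def by (simp add: add.commute)

lemma phi_eval:
  fixes F G :: "'l::linorder \<Rightarrow> real"
  assumes "mono F" "mono G" "F s + G s = of_rat \<alpha>"
  shows "phi \<alpha> F G = F s" "phi \<alpha> G F = G s"
proof -
  define s' where "s' = (SOME t. F t + G t = of_rat \<alpha>)"
  have "F s' + G s' = of_rat \<alpha>" unfolding s'_def by (rule someI[of _ s]) (rule assms(3))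
  then have "F s' = F s \<and> G s' = G s" using sum_level[OF assms(1,2)] assms(3) by simp
  then show "phi \<alpha> F G = F s" "phi \<alpha> G F = G s"
    by (simp_all only: phi_def[of _ F G] phi_comm[of _ G F] s'_def[symmetric])
qed

lemma phi_const:
  fixes F :: "'l::{complete_linorder, dense_linorder, linorder_topology} \<Rightarrow> real"
  assumes "F \<in> M_L" "0 \<le> c" "c \<le> 1"
  shows "phi c F F = of_rat c / 2"
proof -
  have "(of_rat c::real) \<le> 1" using assms(3) by (metis of_rat_1 of_rat_less_eq)
  moreover have "0 \<le> (of_rat c::real)" using assms by (simp add: zero_le_of_rat_iff)
  ultimately have "0 \<le> (of_rat c::real) / 2" "(of_rat c::real)/2 \<le> 1" by linarith+
  then obtain t where "F t = of_rat c / 2" using IVT_M[OF assms(1)] by blast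
  then have "F t + F t = of_rat c" by simp
  then have "phi c F F = F t" using phi_eval(1)[OF Mprops(1)[OF assms(1)] Mprops(1)[OF assms(1)]]
    by blast
  then show ?thesis using \<open>F t = of_rat c / 2\<close> by simp
qed

lemma phi_bounds:
  assumes "F \<in> M_L" shows "0 \<le> phi a F G" "phi a F G \<le> 1"
  using assms by (auto simp: phi_def M_L_def)

definition cmin :: "cform \<Rightarrow> cform \<Rightarrow> cform" where
  "cmin a b = CMinus a (CMinus a b)"

definition psi :: "rat \<Rightarrow> rat \<Rightarrow> rat \<Rightarrow> nat \<Rightarrow> nat \<Rightarrow> cform" where
  "psi c \<alpha> \<beta> p q = CSup (cmin
      (CMinus (CPhi c (Suc p) (Suc p)) (CHalf (CPhi \<alpha> (Suc p) 0)))
      (cmin (CMinus (CHalf (CPhi \<beta> (Suc q) 0)) (CPhi c (Suc q) (Suc q)))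
            (CMinus (CPhi \<alpha> 0 (Suc p)) (CPhi \<beta> 0 (Suc q)))))"

lemma fv_psi: "fv (psi c \<alpha> \<beta> p q) \<subseteq> {p, q}"
  by (auto simp: psi_def cmin_def)

lemma ceval_cmin:
  assumes "0 \<le> ceval a \<rho>" "0 \<le> ceval b \<rho>"
  shows "ceval (cmin a b) \<rho> = min (ceval a \<rho>) (ceval b \<rho>)"
  using assms by (simp add: cmin_def)

lemma ceval_inner:
  fixes \<rho> :: "nat \<Rightarrow> ('l::{complete_linorder, linorder_topology} \<Rightarrow> real)"
  assumes "0 \<le> c" "c \<le> 1" "0 \<le> \<alpha>" "\<alpha> \<le> 1" "0 \<le> \<beta>" "\<beta> \<le> 1"
  shows "ceval (psi c \<alpha> \<beta> p q) \<rho> = (SUP g\<in>M_L.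
     min (max (phi c (\<rho> p) (\<rho> p) - phi \<alpha> (\<rho> p) g / 2) 0)
      (min (max (phi \<beta> (\<rho> q) g / 2 - phi c (\<rho> q) (\<rho> q)) 0)
           (max (phi \<alpha> g (\<rho> p) - phi \<beta> g (\<rho> q)) 0)))"
  unfolding psi_def using assms
  by (simp add: ceval_cmin scons_def)

lemma mono_from_triples:
  fixes a :: "'i::linorder \<Rightarrow> real"
  assumes T: "\<And>i j k. i<j \<Longrightarrow> j<k \<Longrightarrow> \<not>(a i < a j \<and> a j > a k) \<and> \<not>(a i > a j \<and> a j < a k)"
  shows "mono a \<or> antimono a"
proof (rule ccontr)
  assume "\<not> (mono a \<or> antimono a)"
  then obtain x y r s where xy: "x \<le> y" "a x > a y" and rs: "r \<le> s" "a r < a s"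
    unfolding mono_def antimono_def by (auto simp: not_le)
  have "x < y" "r < s" using xy rs by (auto simp: order.order_iff_strict)
  have D1: "a z \<le> a y" if "y < z" for z using T[of x y z] that \<open>x<y\<close> xy by force
  have D2: "a x \<le> a z" if "z < x" for z using T[of z x y] that \<open>x<y\<close> xy by force
  have I1: "a s \<le> a z" if "s < z" for z using T[of r s z] that \<open>r<s\<close> rs by force
  have I2: "a z \<le> a r" if "z < r" for z using T[of z r s] that \<open>r<s\<close> rs by force
  define m where "m = max y s"
  define n where "n = min x r"
  have m1: "a m \<le> a y" using D1[of m] by (cases "y < m") (auto simp: m_def max_def split: if_splits)
  have m2: "a s \<le> a m" using I1[of m] by (cases "s < m") (auto simp: m_def max_def split: if_splits)
  have n1: "a x \<le> a n" using D2[of n] by (cases "n < x") (auto simp: n_def min_def split: if_splits)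
  have n2: "a n \<le> a r" using I2[of n] by (cases "n < r") (auto simp: n_def min_def split: if_splits)
  show False using m1 m2 n1 n2 xy rs by linarith
qed

lemma min3pos:
  fixes A B C :: real
  assumes "\<not> min (max A 0) (min (max B 0) (max C 0)) \<le> 0"
  shows "0 < A" "0 < B" "0 < C"
  using assms by (simp_all add: min_def max_def split: if_splits)

lemma psi_neg:
  fixes \<rho> :: "nat \<Rightarrow> ('l::{complete_linorder, dense_linorder, linorder_topology} \<Rightarrow> real)"
  assumes P: "\<rho> p \<in> M_L" and Q: "\<rho> q \<in> M_L"
    and b: "0 \<le> c" "c \<le> 1" "0 \<le> \<alpha>" "\<alpha> \<le> 1" "0 \<le> \<beta>" "\<beta> \<le> 1"
    and no: "\<not>(\<exists>s. \<rho> p s < of_rat c \<and> of_rat c < \<rho> q s)"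
  shows "ceval (psi c \<alpha> \<beta> p q) \<rho> \<le> 0"
  unfolding ceval_inner[OF b]
proof (rule cSUP_least)
  show "(M_L :: ('l \<Rightarrow> real) set) \<noteq> {}" using P by (metis empty_iff)
next
  fix g :: "'l \<Rightarrow> real" assume g: "g \<in> M_L"
  define s1 where "s1 = (SOME t. \<rho> p t + g t = of_rat \<alpha>)"
  define s2 where "s2 = (SOME t. \<rho> q t + g t = of_rat \<beta>)"
  have e1: "phi \<alpha> (\<rho> p) g = \<rho> p s1" "phi \<alpha> g (\<rho> p) = g s1"
    by (simp_all only: phi_def[of _ "\<rho> p" g] phi_comm[of _ g "\<rho> p"] s1_def[symmetric])
  have e2: "phi \<beta> (\<rho> q) g = \<rho> q s2" "phi \<beta> g (\<rho> q) = g s2"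
    by (simp_all only: phi_def[of _ "\<rho> q" g] phi_comm[of _ g "\<rho> q"] s2_def[symmetric])
  have c1: "phi c (\<rho> p) (\<rho> p) = of_rat c / 2" using phi_const[OF P b(1,2)] .
  have c2: "phi c (\<rho> q) (\<rho> q) = of_rat c / 2" using phi_const[OF Q b(1,2)] .
  show "min (max (phi c (\<rho> p) (\<rho> p) - phi \<alpha> (\<rho> p) g / 2) 0)
      (min (max (phi \<beta> (\<rho> q) g / 2 - phi c (\<rho> q) (\<rho> q)) 0)
           (max (phi \<alpha> g (\<rho> p) - phi \<beta> g (\<rho> q)) 0)) \<le> 0"
  proof (rule ccontr)
    assume "\<not> ?thesis"
    then have "0 < phi c (\<rho> p) (\<rho> p) - phi \<alpha> (\<rho> p) g / 2"
      "0 < phi \<beta> (\<rho> q) g / 2 - phi c (\<rho> q) (\<rho> q)"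
      "0 < phi \<alpha> g (\<rho> p) - phi \<beta> g (\<rho> q)"
      by (rule min3pos)+
    then have h1: "\<rho> p s1 < of_rat c" and h2: "\<rho> q s2 > of_rat c" and h3: "g s1 > g s2"
      unfolding e1 e2 c1 c2 by linarith+
    have "\<not> s1 \<le> s2"
    proof
      assume "s1 \<le> s2" then have "g s1 \<le> g s2" using monoD[OF Mprops(1)[OF g]] by blast
      then show False using h3 by linarith
    qed
    then have "s2 \<le> s1" by simp
    then have "\<rho> q s2 \<le> \<rho> q s1" using monoD[OF Mprops(1)[OF Q]] by blast
    moreover have "\<not> (\<rho> p s1 < of_rat c \<and> of_rat c < \<rho> q s1)" using no by blast
    ultimately show False using h1 h2 by linarith
  qed
qed

lemma rat01: "0 \<le> (of_rat q::real) \<Longrightarrow> of_rat q \<le> (1::real) \<Longrightarrow> 0 \<le> q \<and> q \<le> 1"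
  by (metis of_rat_0 of_rat_1 of_rat_less_eq)

lemma psi_pos:
  fixes \<rho> :: "nat \<Rightarrow> ('l::{complete_linorder, dense_linorder, linorder_topology} \<Rightarrow> real)"
  assumes P: "\<rho> p \<in> M_L" and Q: "\<rho> q \<in> M_L"
    and t1: "\<rho> p t < of_rat c" and t2: "of_rat c < \<rho> q t"
  shows "\<exists>\<alpha> \<beta>. 0 \<le> \<alpha> \<and> \<alpha> \<le> 1 \<and> 0 \<le> \<beta> \<and> \<beta> \<le> 1 \<and> ceval (psi c \<alpha> \<beta> p q) \<rho> > 0"
proof -
  define u where "u = \<rho> p t"
  define v where "v = \<rho> q t"
  define cc :: real where "cc = of_rat c"
  note Pp = Mprops[OF P] and Qp = Mprops[OF Q]
  have u0: "0 \<le> u" using Pp(3) by (simp add: u_def)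
  have v1: "v \<le> 1" using Qp(4) by (simp add: v_def)
  have ucv: "u < cc" "cc < v" using t1 t2 by (simp_all add: u_def v_def cc_def)
  obtain \<beta> :: rat where \<beta>: "cc < of_rat \<beta>" "of_rat \<beta> < v" using of_rat_dense[OF ucv(2)] by blast
  obtain \<alpha> :: rat where \<alpha>: "u < of_rat \<alpha>" "of_rat \<alpha> < cc" using of_rat_dense[OF ucv(1)] by blast
  define a2 :: real where "a2 = of_rat \<beta>"
  define al :: real where "al = of_rat \<alpha>"
  define a1 where "a1 = min ((a2 + v) / 2) (a2 + (al - u) * (1 - a2))"
  have a2v: "0 < a2" "a2 < v" "a2 < 1" using \<beta> ucv u0 v1 unfolding a2_def by linarith+
  have alu: "0 < al - u" using \<alpha> by (simp add: al_def)
  have "0 < (al - u) * (1 - a2)" using alu a2v by simp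
  moreover have "a1 \<le> (a2 + v) / 2" "a1 \<le> a2 + (al - u) * (1 - a2)" unfolding a1_def by (rule min.cobounded1, rule min.cobounded2)
  ultimately have a1: "a2 < a1" "a1 < v" "a1 - a2 \<le> (al - u) * (1 - a2)"
    using a2v by (auto simp: a1_def)
  obtain s2 where s2: "\<rho> q s2 = a2" using IVT_M[OF Q, of a2] a2v by auto
  obtain s1 where s1: "\<rho> q s1 = a1" using IVT_M[OF Q, of a1] a2v a1 v1 by auto
  have "s1 \<le> t"
  proof (rule ccontr)
    assume "\<not> s1 \<le> t" then have "t \<le> s1" by simp
    then have "\<rho> q t \<le> \<rho> q s1" using monoD[OF Qp(1)] by blast
    then show False using s1 a1 by (simp add: v_def)
  qed
  then have u1u: "\<rho> p s1 \<le> u" using monoD[OF Pp(1)] by (simp add: u_def)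
  define u1 where "u1 = \<rho> p s1"
  define \<delta> where "\<delta> = al - u1"
  define lam where "lam = \<delta> / (a1 - a2)"
  have u10: "0 \<le> u1" using Pp(3) by (simp add: u1_def)
  have \<delta>: "0 < \<delta>" "\<delta> \<le> 1" "al - u \<le> \<delta>" using u1u alu u10 \<alpha> ucv v1
    by (simp_all add: \<delta>_def u1_def al_def)
  have lam0: "0 < lam" using \<delta> a1 by (simp add: lam_def)
  have lamd: "lam * (a1 - a2) = \<delta>" using a1 by (simp add: lam_def)
  have "(a1 - a2) \<le> \<delta> * (1 - a2)"
    using a1(3) mult_right_mono[OF \<delta>(3), of "1 - a2"] a2v by linarith
  then have lam1: "1 \<le> lam * (1 - a2)" using a1 unfolding lam_def
    by (simp add: field_simps)
  define h where "h x = max 0 (min 1 (lam * (\<rho> q x - a2)))" for x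
  have hmono: "mono h"
    unfolding h_def
  proof (rule monoI)
    fix x y :: 'l assume "x \<le> y"
    then have "\<rho> q x \<le> \<rho> q y" using monoD[OF Qp(1)] by blast
    then have "lam * (\<rho> q x - a2) \<le> lam * (\<rho> q y - a2)" using lam0 by simp
    then show "max 0 (min 1 (lam * (\<rho> q x - a2))) \<le> max 0 (min 1 (lam * (\<rho> q y - a2)))"
      by linarith
  qed
  have "0 < lam * a2" using a2v lam0 by simp
  then have hbot: "h bot = 0" using Qp(5) by (simp add: h_def max_def min_def)
  have htop: "h top = 1" using Qp(6) lam1 by (simp add: h_def)
  have hM: "h \<in> M_L"
    unfolding M_L_def
  proof (intro CollectI conjI allI)
    fix x show "0 \<le> h x" "h x \<le> 1" by (auto simp: h_def)
  next
    show "mono h" by (rule hmono)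
  next
    show "continuous_on UNIV h" unfolding h_def
      by (intro continuous_intros Qp(2))
  next
    show "(INF t. h t) = 0"
      using hbot by (intro cInf_eq_minimum) (auto simp: h_def)
  next
    show "(SUP t. h t) = 1"
      using htop by (intro cSup_eq_maximum) (auto simp: h_def)
  qed
  have hs2: "h s2 = 0" by (simp add: h_def s2)
  have hs1: "h s1 = \<delta>" using lamd \<delta> by (simp add: h_def s1)
  have "0 \<le> (of_rat c::real)" "(of_rat c::real) \<le> 1"
    using ucv u0 v1 unfolding cc_def by linarith+
  then have c01: "0 \<le> c" "c \<le> 1" using rat01 by blast+
  have "0 \<le> (of_rat \<alpha>::real)" "(of_rat \<alpha>::real) \<le> 1"
    using \<alpha> ucv u0 v1 by linarith+
  then have ab1: "0 \<le> \<alpha>" "\<alpha> \<le> 1" using rat01 by blast+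
  have "0 \<le> (of_rat \<beta>::real)" "(of_rat \<beta>::real) \<le> 1"
    using \<beta> ucv u0 v1 by linarith+
  then have ab2: "0 \<le> \<beta>" "\<beta> \<le> 1" using rat01 by blast+
  note ab = ab1 ab2
  have e1: "phi \<alpha> (\<rho> p) h = u1" "phi \<alpha> h (\<rho> p) = \<delta>"
    using phi_eval[OF Pp(1) hmono, of s1 \<alpha>] hs1 by (simp_all add: \<delta>_def u1_def al_def)
  have e2: "phi \<beta> (\<rho> q) h = a2" "phi \<beta> h (\<rho> q) = 0"
    using phi_eval[OF Qp(1) hmono, of s2 \<beta>] hs2 s2 by (simp_all add: a2_def)
  have c1: "phi c (\<rho> p) (\<rho> p) = cc / 2" using phi_const[OF P c01] by (simp add: cc_def)
  have c2: "phi c (\<rho> q) (\<rho> q) = cc / 2" using phi_const[OF Q c01] by (simp add: cc_def)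
  define inner where "inner g = min (max (phi c (\<rho> p) (\<rho> p) - phi \<alpha> (\<rho> p) g / 2) 0)
      (min (max (phi \<beta> (\<rho> q) g / 2 - phi c (\<rho> q) (\<rho> q)) 0)
           (max (phi \<alpha> g (\<rho> p) - phi \<beta> g (\<rho> q)) 0))" for g
  have pos: "0 < inner h"
  proof -
    have x1: "0 < cc/2 - u1/2" using u1u \<alpha> ucv unfolding u1_def by linarith
    have x2: "0 < a2/2 - cc/2" using \<beta> unfolding a2_def by linarith
    show ?thesis unfolding inner_def e1 e2 c1 c2 using x1 x2 \<delta>(1) by simp
  qed
  have bdd: "bdd_above (inner ` M_L)"
  proof (rule bdd_aboveI2)
    fix g :: "'l \<Rightarrow> real" assume "g \<in> M_L"
    have "phi c (\<rho> p) (\<rho> p) \<le> 1" "0 \<le> phi \<alpha> (\<rho> p) g" using phi_bounds[OF P] by auto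
    then show "inner g \<le> 1" unfolding inner_def by linarith
  qed
  have "inner h \<le> (SUP g\<in>M_L. inner g)" by (rule cSUP_upper[OF hM bdd])
  moreover have "ceval (psi c \<alpha> \<beta> p q) \<rho> = (SUP g\<in>M_L. inner g)"
    unfolding inner_def by (rule ceval_inner[OF c01 ab])
  ultimately have "ceval (psi c \<alpha> \<beta> p q) \<rho> > 0" using pos by linarith
  then show ?thesis using ab by blast
qed


theorem mainTheorem18:
  fixes f :: "'i::linorder \<Rightarrow> ('l::{complete_linorder, dense_linorder, linorder_topology} \<Rightarrow> real)"
    and a :: "'i \<Rightarrow> real"
  assumes nontriv: "(bot::'l) < top"
    and inML: "\<forall>i. f i \<in> M_L"
    and indisc: "indiscernible f"
    and a_im: "a \<in> im f"
  shows "mono a \<or> antimono a"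
proof -
  obtain t where a: "a = (\<lambda>i. f i t)" using a_im by (auto simp: im_def)
  have mo: "mono (f i)" for i using Mprops(1) inML by blast
  have b0: "0 \<le> f i s" "f i s \<le> 1" for i s using Mprops(3,4) inML by blast+
  have key: "\<not>(a i < a j \<and> a j > a k) \<and> \<not>(a i > a j \<and> a j < a k)" if ij: "i<j" and jk: "j<k" for i j k
  proof -
    have ind: "ceval \<phi> (tuple_env f [i,j]) = ceval \<phi> (tuple_env f [j,k])" if "fv \<phi> \<subseteq> {0,1}" for \<phi>
    proof -
      have "sorted_wrt (<) [i,j]" "sorted_wrt (<) [j,k]" "length [i,j] = length [j,k]"
        "fv \<phi> \<subseteq> {..<length [i,j]}" using ij jk that by auto
      then show ?thesis using indisc unfolding indiscernible_def by blast
    qed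
    have te: "tuple_env f [i,j] 0 = f i" "tuple_env f [i,j] 1 = f j"
      "tuple_env f [j,k] 0 = f j" "tuple_env f [j,k] 1 = f k" by (simp_all add: tuple_env_def)
    have M: "tuple_env f [i,j] 0 \<in> M_L" "tuple_env f [i,j] 1 \<in> M_L"
      "tuple_env f [j,k] 0 \<in> M_L" "tuple_env f [j,k] 1 \<in> M_L" using inML te by simp_all
    show ?thesis
    proof (intro conjI notI)
      assume h: "a i < a j \<and> a j > a k"
      then have "max (f i t) (f k t) < f j t" by (simp add: a)
      then obtain c :: rat where c: "max (f i t) (f k t) < of_rat c" "of_rat c < f j t"
        using of_rat_dense by blast
      have "0 \<le> (of_rat c::real)" "(of_rat c::real) \<le> 1" using c b0[of i t] b0[of j t] by linarith+
      then have c01: "0 \<le> c" "c \<le> 1" using rat01 by blast+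
      obtain \<alpha> \<beta> where ab: "0 \<le> \<alpha>" "\<alpha> \<le> 1" "0 \<le> \<beta>" "\<beta> \<le> 1"
        and pos: "ceval (psi c \<alpha> \<beta> 0 1) (tuple_env f [i,j]) > 0"
        using psi_pos[OF M(1,2), of t c] c unfolding te by auto
      have no: "\<not>(\<exists>s. tuple_env f [j,k] 0 s < of_rat c \<and> of_rat c < tuple_env f [j,k] 1 s)"
      proof
        assume "\<exists>s. tuple_env f [j,k] 0 s < of_rat c \<and> of_rat c < tuple_env f [j,k] 1 s"
        then obtain s where s: "f j s < of_rat c" "of_rat c < f k s" unfolding te by blast
        show False
        proof (cases "s \<le> t")
          case True then have "f k s \<le> f k t" using mo monoD by blast
          then show False using s c by linarith
        next
          case False then have "f j t \<le> f j s" using mo monoD by (metis linear)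
          then show False using s c by linarith
        qed
      qed
      have "ceval (psi c \<alpha> \<beta> 0 1) (tuple_env f [j,k]) \<le> 0"
        by (rule psi_neg[OF M(3,4) c01 ab no])
      moreover have "ceval (psi c \<alpha> \<beta> 0 1) (tuple_env f [i,j]) = ceval (psi c \<alpha> \<beta> 0 1) (tuple_env f [j,k])"
        by (rule ind) (rule fv_psi)
      ultimately show False using pos by linarith
    next
      assume h: "a i > a j \<and> a j < a k"
      then have "f j t < min (f i t) (f k t)" by (simp add: a)
      then obtain c :: rat where c: "f j t < of_rat c" "of_rat c < min (f i t) (f k t)"
        using of_rat_dense by blast
      have "0 \<le> (of_rat c::real)" "(of_rat c::real) \<le> 1" using c b0[of i t] b0[of j t] by linarith+
      then have c01: "0 \<le> c" "c \<le> 1" using rat01 by blast+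
      obtain \<alpha> \<beta> where ab: "0 \<le> \<alpha>" "\<alpha> \<le> 1" "0 \<le> \<beta>" "\<beta> \<le> 1"
        and pos: "ceval (psi c \<alpha> \<beta> 1 0) (tuple_env f [i,j]) > 0"
        using psi_pos[OF M(2,1), of t c] c unfolding te by auto
      have no: "\<not>(\<exists>s. tuple_env f [j,k] 1 s < of_rat c \<and> of_rat c < tuple_env f [j,k] 0 s)"
      proof
        assume "\<exists>s. tuple_env f [j,k] 1 s < of_rat c \<and> of_rat c < tuple_env f [j,k] 0 s"
        then obtain s where s: "f k s < of_rat c" "of_rat c < f j s" unfolding te by blast
        show False
        proof (cases "s \<le> t")
          case True then have "f j s \<le> f j t" using mo monoD by blast
          then show False using s c by linarith
        next
          case False then have "f k t \<le> f k s" using mo monoD by (metis linear)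
          then show False using s c by linarith
        qed
      qed
      have "ceval (psi c \<alpha> \<beta> 1 0) (tuple_env f [j,k]) \<le> 0"
        by (rule psi_neg[OF M(4,3) c01 ab no])
      moreover have "ceval (psi c \<alpha> \<beta> 1 0) (tuple_env f [i,j]) = ceval (psi c \<alpha> \<beta> 1 0) (tuple_env f [j,k])"
        by (rule ind) (use fv_psi[of c \<alpha> \<beta> 1 0] in auto)
      ultimately show False using pos by linarith
    qed
  qed
  show ?thesis by (rule mono_from_triples) (use key in blast)
qed

end
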